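(* Let $G$ be a paratopological group with unit $e$. For every neighborhood $U\subset G$ of $e$ there is a left-invariant $\overline{\mathsf{dist}}$-continuous quasi-pseudometric $d:G\times G\to[0,1]$ whose regularization satisfies $\overline d=\overline d^\circ$ and is a left-invariant right-continuous $\overline{\mathsf{dist}}$-continuous quasi-pseudometric, such that $B_d(x;1)\subset xU$ and $B_{\overline d}(x,1)\subset x\,\mathrm{int}\,\overline{U}$ for every $x\in G$. If $G$ is balanced, then $d$ and $\overline d=\overline d^\circ$ are invariant.
   Context: A paratopological group is a group with a topology making multiplication $G\times G\to G$ continuous (inversion need not be continuous). $G$ is balanced if $e$ has a neighborhood base of open sets $V$ with $xV=Vx$ for all $x\in G$. A quasi-pseudometric is $d:G\times G\to[0,\infty)$ with $d(x,x)=0$ and $d(x,z)\le d(x,y)+d(y,z)$; left-invariant if $d(zx,zy)=d(x,y)$, right-invariant if $d(xz,yz)=d(x,y)$, invariant if both. $B_d(x,\varepsilon)=\{y:d(x,y)<\varepsilon\}$, $B_d(A,\varepsilon)=\bigcup_{a\in A}B_d(a,\varepsilon)$. Right-continuous: $y\mapsto d(x,y)$ continuous for each $x$. For non-empty $A$: $\overline d_A(x)=\inf\{\varepsilon>0:x\in\overline{B_d(A,\varepsilon)}\}$, $\overline d^\circ_A(x)=\inf\{\varepsilon>0:x\in B_d(A,\varepsilon)\cup\mathrm{int}\,\overline{B_d(A,\varepsilon)}\}$; $d$ is $\overline{\mathsf{dist}}$-continuous if every $\overline d_A$ is continuous. $\overline d(x,y)=\overline d_{\{x\}}(y)$ and $\overline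 d^\circ(x,y)=\overline d^\circ_{\{x\}}(y)$. *)

theory Defs
  imports "HOL-Analysis.Analysis"
begin

text \<open>Groups are written additively via the (not necessarily commutative) type class
  group_add: the group product x y is x + y, the unit e is 0.\<close>

definition paratopological_group :: "'a::{topological_space,group_add} itself \<Rightarrow> bool" where
  "paratopological_group _ \<longleftrightarrow> continuous_on UNIV (\<lambda>p::'a \<times> 'a. fst p + snd p)"

definition balanced_group :: "'a::{topological_space,group_add} itself \<Rightarrow> bool" where
  "balanced_group _ \<longleftrightarrow>
     (\<forall>W::'a set. open W \<and> 0 \<in> W \<longrightarrow>
        (\<exists>V. open V \<and> 0 \<in> V \<and> V \<subseteq> W \<and> (\<forall>x. (\<lambda>v. x + v) ` V = (\<lambda>v. v + x) ` V)))"

definition quasi_pseudometric :: "('a \<Rightarrow> 'a \<Rightarrow> real) \<Rightarrow> bool" where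
  "quasi_pseudometric d \<longleftrightarrow> (\<forall>x y. 0 \<le> d x y) \<and> (\<forall>x. d x x = 0) \<and>
     (\<forall>x y z. d x z \<le> d x y + d y z)"

definition left_invariant :: "('a::group_add \<Rightarrow> 'a \<Rightarrow> real) \<Rightarrow> bool" where
  "left_invariant d \<longleftrightarrow> (\<forall>x y z. d (z + x) (z + y) = d x y)"

definition right_invariant :: "('a::group_add \<Rightarrow> 'a \<Rightarrow> real) \<Rightarrow> bool" where
  "right_invariant d \<longleftrightarrow> (\<forall>x y z. d (x + z) (y + z) = d x y)"

definition invariant :: "('a::group_add \<Rightarrow> 'a \<Rightarrow> real) \<Rightarrow> bool" where
  "invariant d \<longleftrightarrow> left_invariant d \<and> right_invariant d"

definition qball :: "('a \<Rightarrow> 'a \<Rightarrow> real) \<Rightarrow> 'a \<Rightarrow> real \<Rightarrow> 'a set" where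
  "qball d x e = {y. d x y < e}"

definition qball_set :: "('a \<Rightarrow> 'a \<Rightarrow> real) \<Rightarrow> 'a set \<Rightarrow> real \<Rightarrow> 'a set" where
  "qball_set d A e = (\<Union>a\<in>A. qball d a e)"

definition right_continuous :: "('a::topological_space \<Rightarrow> 'a \<Rightarrow> real) \<Rightarrow> bool" where
  "right_continuous d \<longleftrightarrow> (\<forall>x. continuous_on UNIV (d x))"

text \<open>The set of admissible epsilons is nonempty for nonempty A (any e > d a x works),
  and bounded below by 0, so the real infimum is the intended one.\<close>

definition dbar_set :: "('a::topological_space \<Rightarrow> 'a \<Rightarrow> real) \<Rightarrow> 'a set \<Rightarrow> 'a \<Rightarrow> real" where
  "dbar_set d A x = Inf {e. e > 0 \<and> x \<in> closure (qball_set d A e)}"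

definition dbar_circ_set :: "('a::topological_space \<Rightarrow> 'a \<Rightarrow> real) \<Rightarrow> 'a set \<Rightarrow> 'a \<Rightarrow> real" where
  "dbar_circ_set d A x =
     Inf {e. e > 0 \<and> x \<in> qball_set d A e \<union> interior (closure (qball_set d A e))}"

definition dist_continuous :: "('a::topological_space \<Rightarrow> 'a \<Rightarrow> real) \<Rightarrow> bool" where
  "dist_continuous d \<longleftrightarrow> (\<forall>A. A \<noteq> {} \<longrightarrow> continuous_on UNIV (dbar_set d A))"

definition dbar :: "('a::topological_space \<Rightarrow> 'a \<Rightarrow> real) \<Rightarrow> 'a \<Rightarrow> 'a \<Rightarrow> real" where
  "dbar d x y = dbar_set d {x} y"

definition dbar_circ :: "('a::topological_space \<Rightarrow> 'a \<Rightarrow> real) \<Rightarrow> 'a \<Rightarrow> 'a \<Rightarrow> real" where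
  "dbar_circ d x y = dbar_circ_set d {x} y"

end

theory Submission
  imports Defs
begin


lemma pg_cont:
  assumes "paratopological_group TYPE('a::{topological_space,group_add})"
  shows "continuous_on UNIV (\<lambda>p::'a\<times>'a. fst p + snd p)"
  using assms unfolding paratopological_group_def by simp

lemma cont_left:
  assumes "paratopological_group TYPE('a::{topological_space,group_add})"
  shows "continuous_on UNIV (\<lambda>y::'a. c + y)"
proof -
  have "continuous_on UNIV (\<lambda>y::'a. fst (c,y) + snd (c,y))"
    by (rule continuous_on_compose2[OF pg_cont[OF assms]]) (auto intro!: continuous_intros)
  then show ?thesis by simp
qed

lemma cont_right:
  assumes "paratopological_group TYPE('a::{topological_space,group_add})"
  shows "continuous_on UNIV (\<lambda>y::'a. y + c)"
proof -
  have "continuous_on UNIV (\<lambda>y::'a. fst (y,c) + snd (y,c))"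
    by (rule continuous_on_compose2[OF pg_cont[OF assms]]) (auto intro!: continuous_intros)
  then show ?thesis by simp
qed

lemma cont_conj:
  assumes "paratopological_group TYPE('a::{topological_space,group_add})"
  shows "continuous_on UNIV (\<lambda>y::'a. -c + y + c)"
  using continuous_on_compose2[OF cont_right[OF assms, of c] cont_left[OF assms, of "-c"]] by simp

lemma open_left_vimage:
  assumes "paratopological_group TYPE('a::{topological_space,group_add})" "open S"
  shows "open {y::'a. c + y \<in> S}"
  using open_vimage[OF assms(2) cont_left[OF assms(1), of c]] by (simp add: vimage_def)

lemma closure_right:
  assumes "paratopological_group TYPE('a::{topological_space,group_add})"
    and "y \<in> closure S" and "\<And>s. s \<in> S \<Longrightarrow> s + b \<in> closure T"
  shows "(y::'a) + b \<in> closure T"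
proof -
  have "(\<lambda>y. y + b) ` closure S \<subseteq> closure T"
    by (rule image_closure_subset[OF continuous_on_subset[OF cont_right[OF assms(1)] subset_UNIV]]) (use assms in auto)
  then show ?thesis using assms(2) by auto
qed

lemma closure_left:
  assumes "paratopological_group TYPE('a::{topological_space,group_add})"
    and "y \<in> closure S" and "\<And>s. s \<in> S \<Longrightarrow> b + s \<in> closure T"
  shows "b + (y::'a) \<in> closure T"
proof -
  have "(\<lambda>y. b + y) ` closure S \<subseteq> closure T"
    by (rule image_closure_subset[OF continuous_on_subset[OF cont_left[OF assms(1)] subset_UNIV]]) (use assms in auto)
  then show ?thesis using assms(2) by auto
qed

lemma closure_conj:
  assumes "paratopological_group TYPE('a::{topological_space,group_add})"
    and "y \<in> closure S" and "\<And>s. s \<in> S \<Longrightarrow> -c + s + c \<in> closure T"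
  shows "-c + (y::'a) + c \<in> closure T"
proof -
  have "(\<lambda>y. -c + y + c) ` closure S \<subseteq> closure T"
    by (rule image_closure_subset[OF continuous_on_subset[OF cont_conj[OF assms(1)] subset_UNIV]]) (use assms in auto)
  then show ?thesis using assms(2) by auto
qed

lemma cont_crit:
  fixes h :: "'a::topological_space \<Rightarrow> real"
  assumes "\<And>b. open {x. h x < b}" and "\<And>a. open {x. a < h x}"
  shows "continuous_on UNIV h"
proof (subst continuous_on_open_vimage[OF open_UNIV], intro allI impI)
  fix B :: "real set" assume B: "open B"
  have "open (h -` B)"
  proof (subst open_subopen, intro ballI)
    fix x assume "x \<in> h -` B"
    then obtain e where e: "e > 0" "ball (h x) e \<subseteq> B" using B open_contains_ball by blast
    let ?T = "{y. h y < h x + e} \<inter> {y. h x - e < h y}"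
    have "open ?T" using assms by auto
    moreover have "x \<in> ?T" using e by auto
    moreover have "?T \<subseteq> h -` B"
    proof
      fix y assume "y \<in> ?T"
      then have "y \<in> h -` ball (h x) e" by (auto simp: dist_real_def)
      then show "y \<in> h -` B" using e by auto
    qed
    ultimately show "\<exists>T. open T \<and> x \<in> T \<and> T \<subseteq> h -` B" by blast
  qed
  then show "open (h -` B \<inter> UNIV)" by simp
qed




definition good :: "('a::{topological_space,group_add} \<Rightarrow> real) \<Rightarrow> bool" where
  "good f \<longleftrightarrow> (\<forall>z. 0 \<le> f z \<and> f z \<le> 1) \<and> f 0 = 0 \<and> (\<forall>a b. f (a + b) \<le> f a + f b)
     \<and> (\<forall>e. open {z. f z < e})"

locale gf =
  fixes f :: "'a::{topological_space,group_add} \<Rightarrow> real"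
  assumes P: "paratopological_group TYPE('a)" and G: "good f"
begin

lemma f_nonneg: "0 \<le> f z" and f_le1: "f z \<le> 1" and f0: "f 0 = 0"
  and f_sub: "f (a + b) \<le> f a + f b" and f_open: "open {z. f z < e}"
  using G unfolding good_def by auto

definition Q :: "'a set \<Rightarrow> real \<Rightarrow> 'a set" where
  "Q A e = {y. \<exists>a\<in>A. f (-a + y) < e}"

definition X :: "'a set \<Rightarrow> 'a \<Rightarrow> real set" where
  "X A x = {e. e > 0 \<and> x \<in> closure (Q A e)}"

lemma qball_set_eq: "qball_set (\<lambda>x y. f (-x + y)) A e = Q A e"
  by (auto simp: qball_set_def qball_def Q_def)

lemma dbar_set_eq: "dbar_set (\<lambda>x y. f (-x + y)) A x = Inf (X A x)"
  by (simp add: dbar_set_def X_def qball_set_eq)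

lemma dbar_circ_set_eq: "dbar_circ_set (\<lambda>x y. f (-x + y)) A x =
   Inf {e. e > 0 \<and> x \<in> Q A e \<union> interior (closure (Q A e))}"
  by (simp add: dbar_circ_set_def qball_set_eq)

lemma Q_open: "open (Q A e)"
proof -
  have "Q A e = (\<Union>a\<in>A. {y. -a + y \<in> {z. f z < e}})" by (auto simp: Q_def)
  then show ?thesis using open_left_vimage[OF P f_open] by auto
qed

lemma Q_mono: "e \<le> e' \<Longrightarrow> Q A e \<subseteq> Q A e'"
  unfolding Q_def by (auto intro: less_le_trans)

lemma Q_UNIV: "A \<noteq> {} \<Longrightarrow> e > 1 \<Longrightarrow> Q A e = UNIV"
proof -
  assume "A \<noteq> {}" "e > 1"
  then obtain a where "a \<in> A" by blast
  then show ?thesis using \<open>e > 1\<close> by (auto simp: Q_def intro!: bexI[of _ a] le_less_trans[OF f_le1])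
qed

lemma Q_shift:
  assumes "y \<in> closure (Q A \<delta>)" "f z < \<eta>"
  shows "y + z \<in> closure (Q A (\<delta> + \<eta>))"
proof (rule closure_right[OF P assms(1)])
  fix s assume "s \<in> Q A \<delta>"
  then obtain a where a: "a \<in> A" "f (-a + s) < \<delta>" by (auto simp: Q_def)
  have "f (-a + (s + z)) \<le> f (-a + s) + f z"
    using f_sub[of "-a + s" z] by (simp add: add.assoc)
  then have "s + z \<in> Q A (\<delta> + \<eta>)" using a assms(2) by (force simp: Q_def)
  then show "s + z \<in> closure (Q A (\<delta> + \<eta>))" using closure_subset by blast
qed

lemma Q_int:
  assumes "y \<in> closure (Q A \<delta>)" "\<delta> < e"
  shows "y \<in> interior (closure (Q A e))"
proof (rule interiorI)
  let ?T = "{w. -y + w \<in> {z. f z < e - \<delta>}}"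
  show "open ?T" by (rule open_left_vimage[OF P f_open])
  show "y \<in> ?T" using f0 assms by simp
  show "?T \<subseteq> closure (Q A e)"
  proof
    fix w assume "w \<in> ?T"
    then have "f (-y + w) < e - \<delta>" by simp
    from Q_shift[OF assms(1) this] have "y + (-y + w) \<in> closure (Q A (\<delta> + (e - \<delta>)))" .
    then show "w \<in> closure (Q A e)" by (simp add: add.assoc[symmetric])
  qed
qed

lemma X_ne: "A \<noteq> {} \<Longrightarrow> X A x \<noteq> {}"
proof -
  assume "A \<noteq> {}"
  then have "(2::real) \<in> X A x" using Q_UNIV[of A 2] by (simp add: X_def)
  then show ?thesis by blast
qed

lemma X_bdd: "bdd_below (X A x)"
  by (rule bdd_belowI[of _ 0]) (auto simp: X_def)

lemma X_up: "e \<in> X A x \<Longrightarrow> e \<le> e' \<Longrightarrow> e' \<in> X A x"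
  using closure_mono[OF Q_mono[of e e' A]] by (auto simp: X_def)

lemma h_nonneg: "A \<noteq> {} \<Longrightarrow> 0 \<le> Inf (X A x)"
  by (rule cInf_greatest[OF X_ne]) (auto simp: X_def)

lemma h_less: "A \<noteq> {} \<Longrightarrow> Inf (X A x) < b \<Longrightarrow> \<exists>\<delta>\<in>X A x. \<delta> < b"
  by (rule cInf_lessD[OF X_ne])

lemma h_le: "e \<in> X A x \<Longrightarrow> Inf (X A x) \<le> e"
  by (rule cInf_lower[OF _ X_bdd])

lemma open_less: assumes "A \<noteq> {}" shows "open {x. Inf (X A x) < b}"
proof (subst open_subopen, intro ballI)
  fix x assume "x \<in> {x. Inf (X A x) < b}"
  then obtain \<delta> where d: "\<delta> \<in> X A x" "\<delta> < b" using h_less[OF assms] by auto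
  let ?T = "{w. -x + w \<in> {z. f z < (b - \<delta>) / 2}}"
  have "open ?T" by (rule open_left_vimage[OF P f_open])
  moreover have "x \<in> ?T" using f0 d by simp
  moreover have "?T \<subseteq> {x. Inf (X A x) < b}"
  proof
    fix w assume "w \<in> ?T"
    then have "f (-x + w) < (b - \<delta>) / 2" by simp
    from Q_shift[OF _ this, of x A \<delta>] d have "x + (-x + w) \<in> closure (Q A (\<delta> + (b - \<delta>) / 2))"
      by (simp only: X_def mem_Collect_eq)
    moreover have "0 < \<delta> + (b - \<delta>) / 2" using d by (auto simp: X_def field_simps)
    ultimately have "\<delta> + (b - \<delta>) / 2 \<in> X A w" by (simp add: X_def add.assoc[symmetric])
    then have "Inf (X A w) \<le> \<delta> + (b - \<delta>) / 2" by (rule h_le)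
    then show "w \<in> {x. Inf (X A x) < b}" using d by (auto simp: field_simps)
  qed
  ultimately show "\<exists>T. open T \<and> x \<in> T \<and> T \<subseteq> {x. Inf (X A x) < b}" by blast
qed

lemma open_gr: assumes "A \<noteq> {}" shows "open {x. a < Inf (X A x)}"
proof (cases "a < 0")
  case True
  then have "{x. a < Inf (X A x)} = UNIV" using h_nonneg[OF assms] by (auto intro: less_le_trans)
  then show ?thesis by simp
next
  case False
  show ?thesis
  proof (subst open_subopen, intro ballI)
    fix x assume x: "x \<in> {x. a < Inf (X A x)}"
    define c where "c = (a + Inf (X A x)) / 2"
    have c: "a < c" "c < Inf (X A x)" "c > 0" using x False by (auto simp: c_def)
    have nx: "x \<notin> closure (Q A c)"
      using h_le[of c A x] c by (auto simp: X_def)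
    let ?T = "- closure (Q A c)"
    have "?T \<subseteq> {x. a < Inf (X A x)}"
    proof
      fix y assume y: "y \<in> ?T"
      have "c \<le> Inf (X A y)"
      proof (rule cInf_greatest[OF X_ne[OF assms]])
        fix e assume "e \<in> X A y"
        show "c \<le> e"
        proof (rule ccontr)
          assume "\<not> c \<le> e"
          then have "c \<in> X A y" using X_up[OF \<open>e \<in> X A y\<close>, of c] by simp
          then show False using y by (simp add: X_def)
        qed
      qed
      then show "y \<in> {x. a < Inf (X A x)}" using c by simp
    qed
    then show "\<exists>T. open T \<and> x \<in> T \<and> T \<subseteq> {x. a < Inf (X A x)}"
      using nx by (intro exI[of _ ?T]) auto
  qed
qed

lemma h_cont: "A \<noteq> {} \<Longrightarrow> continuous_on UNIV (\<lambda>x. Inf (X A x))"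
  by (rule cont_crit) (auto intro: open_less open_gr)

lemma dist_cont: "dist_continuous (\<lambda>x y. f (-x + y))"
  unfolding dist_continuous_def dbar_set_eq using h_cont by simp

lemma circ_eq:
  assumes A: "A \<noteq> {}"
  shows "dbar_circ_set (\<lambda>x y. f (-x + y)) A x = dbar_set (\<lambda>x y. f (-x + y)) A x"
proof -
  let ?Y = "{e. e > 0 \<and> x \<in> Q A e \<union> interior (closure (Q A e))}"
  have sub: "?Y \<subseteq> X A x" using closure_subset interior_subset by (auto simp: X_def)
  have Yne: "?Y \<noteq> {}"
  proof -
    have "(2::real) \<in> ?Y" using Q_UNIV[OF A, of 2] by simp
    then show ?thesis by blast
  qed
  have Ybdd: "bdd_below ?Y" by (rule bdd_belowI[of _ 0]) auto
  have "Inf (X A x) \<le> Inf ?Y" by (rule cInf_superset_mono[OF Yne X_bdd sub])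
  moreover have "Inf ?Y \<le> Inf (X A x)"
  proof (rule cInf_greatest[OF X_ne[OF A]])
    fix e assume e: "e \<in> X A x"
    show "Inf ?Y \<le> e"
    proof (rule dense_ge)
      fix e' assume "e < e'"
      then have "e' \<in> ?Y" using e Q_int[of x A e e'] by (auto simp: X_def)
      then show "Inf ?Y \<le> e'" by (rule cInf_lower[OF _ Ybdd])
    qed
  qed
  ultimately show ?thesis by (simp add: dbar_set_eq dbar_circ_set_eq)
qed

definition g :: "'a \<Rightarrow> real" where "g z = Inf (X {0} z)"

lemma Q0: "Q {0} e = {z. f z < e}" by (simp add: Q_def)

lemma X_shift: "X {x} y = X {0} (-x + y)"
proof -
  have "y \<in> closure (Q {x} e) \<longleftrightarrow> -x + y \<in> closure (Q {0} e)" for e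
  proof
    assume "y \<in> closure (Q {x} e)"
    then show "-x + y \<in> closure (Q {0} e)"
    proof (rule closure_left[OF P])
      fix s assume "s \<in> Q {x} e"
      then have "-x + s \<in> Q {0} e" by (simp add: Q_def)
      then show "-x + s \<in> closure (Q {0} e)" using closure_subset by blast
    qed
  next
    assume "-x + y \<in> closure (Q {0} e)"
    then have "x + (-x + y) \<in> closure (Q {x} e)"
    proof (rule closure_left[OF P])
      fix s assume "s \<in> Q {0} e"
      then have "x + s \<in> Q {x} e" by (simp add: Q_def add.assoc[symmetric])
      then show "x + s \<in> closure (Q {x} e)" using closure_subset by blast
    qed
    then show "y \<in> closure (Q {x} e)" by simp
  qed
  then show ?thesis by (simp add: X_def)
qed

lemma dbar_eq: "dbar (\<lambda>x y. f (-x + y)) = (\<lambda>x y. g (-x + y))"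
proof (intro ext)
  fix x y
  show "dbar (\<lambda>x y. f (-x + y)) x y = g (-x + y)"
    unfolding dbar_def dbar_set_eq g_def by (subst X_shift) (rule refl)
qed

lemma dbar_circ_eq: "dbar_circ (\<lambda>x y. f (-x + y)) = dbar (\<lambda>x y. f (-x + y))"
  by (intro ext) (simp add: dbar_def dbar_circ_def circ_eq)

lemma g_good: "good g"
  unfolding good_def
proof (intro conjI allI)
  fix z
  show "0 \<le> g z" unfolding g_def by (rule h_nonneg) simp
  show "g z \<le> 1" unfolding g_def
  proof (rule dense_ge)
    fix e :: real assume "1 < e"
    then have "e \<in> X {0} z" using Q_UNIV[of "{0}" e] by (simp add: X_def)
    then show "Inf (X {0} z) \<le> e" by (rule h_le)
  qed
next
  show "g 0 = 0"
  proof -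
    have "X {0} 0 = {0<..}"
    proof -
      have "0 \<in> closure (Q {0} e)" if "e > 0" for e
      proof -
        have "0 \<in> Q {0} e" using that f0 by (simp add: Q0)
        then show ?thesis by (rule subsetD[OF closure_subset])
      qed
      then show ?thesis by (auto simp: X_def)
    qed
    then show ?thesis by (simp add: g_def)
  qed
next
  fix a b
  have key: "g (a + b) \<le> e1 + e2" if e1: "e1 \<in> X {0} a" and e2: "e2 \<in> X {0} b" for e1 e2
  proof -
    have cl: "s + b \<in> closure {z. f z < e1 + e2}" if "f s < e1" for s
    proof (rule closure_left[OF P])
      show "b \<in> closure (Q {0} e2)" using e2 by (simp add: X_def)
      fix t assume "t \<in> Q {0} e2"
      then have "f (s + t) < e1 + e2" using that f_sub[of s t] by (simp add: Q0)
      then have "s + t \<in> {z. f z < e1 + e2}" by simp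
      then show "s + t \<in> closure {z. f z < e1 + e2}" by (rule subsetD[OF closure_subset])
    qed
    have "a + b \<in> closure {z. f z < e1 + e2}"
    proof (rule closure_right[OF P])
      show "a \<in> closure (Q {0} e1)" using e1 by (simp add: X_def)
    qed (use cl in \<open>simp add: Q0\<close>)
    then have "e1 + e2 \<in> X {0} (a + b)" using e1 e2 by (simp add: X_def Q0)
    then show ?thesis unfolding g_def by (rule h_le)
  qed
  have "g (a + b) - g b \<le> g a" unfolding g_def[of a]
  proof (rule cInf_greatest[OF X_ne], simp)
    fix e1 assume e1: "e1 \<in> X {0} a"
    have "g (a + b) - e1 \<le> g b" unfolding g_def[of b]
    proof (rule cInf_greatest[OF X_ne], simp)
      fix e2 assume "e2 \<in> X {0} b"
      from key[OF e1 this] show "g (a + b) - e1 \<le> e2" by simp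
    qed
    then show "g (a + b) - g b \<le> e1" by simp
  qed
  then show "g (a + b) \<le> g a + g b" by simp
next
  fix e
  show "open {z. g z < e}" unfolding g_def by (rule open_less) simp
qed

lemma g_lt1: assumes "g z < 1" shows "z \<in> interior (closure {w. f w < 1})"
proof -
  obtain \<delta> where d: "\<delta> \<in> X {0} z" "\<delta> < 1" using h_less[of "{0}" z 1] assms unfolding g_def by auto
  then have "z \<in> closure (Q {0} \<delta>)" by (simp add: X_def)
  from Q_int[OF this d(2)] show ?thesis by (simp only: Q0)
qed

lemma conj_closure:
  assumes "\<And>c z. f (-c + z + c) = f z" and "y \<in> closure {w. f w < e}"
  shows "-c + y + c \<in> closure {w. f w < e}"
  using assms(2)
proof (rule closure_conj[OF P])
  fix s assume "s \<in> {w. f w < e}"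
  then have "f s < e" by simp
  then have "f (-c + s + c) < e" by (subst assms(1))
  then have "-c + s + c \<in> {w. f w < e}" by (rule CollectI)
  then show "-c + s + c \<in> closure {w. f w < e}" by (rule subsetD[OF closure_subset])
qed

lemma g_conj:
  assumes "\<And>c z. f (-c + z + c) = f z"
  shows "g (-c + z + c) = g z"
proof -
  note imp = conj_closure[OF assms]
  have "z \<in> closure (Q {0} e) \<longleftrightarrow> -c + z + c \<in> closure (Q {0} e)" for e
  proof
    assume "z \<in> closure (Q {0} e)" then show "-c + z + c \<in> closure (Q {0} e)"
      unfolding Q0 by (rule imp)
  next
    assume "-c + z + c \<in> closure (Q {0} e)"
    then have "- (-c) + (-c + z + c) + (-c) \<in> closure (Q {0} e)" unfolding Q0 by (rule imp)
    moreover have "- (-c) + (-c + z + c) + (-c) = z"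
      by (simp only: minus_minus add.assoc add_minus_cancel right_minus add_0_right)
    ultimately show "z \<in> closure (Q {0} e)" by (simp only:)
  qed
  then have "X {0} (-c + z + c) = X {0} z" unfolding X_def by (simp only:)
  then show ?thesis by (simp only: g_def)
qed

lemma d_props:
  "quasi_pseudometric (\<lambda>x y. f (-x + y))" "left_invariant (\<lambda>x y. f (-x + y))"
proof -
  show "quasi_pseudometric (\<lambda>x y. f (-x + y))"
    unfolding quasi_pseudometric_def
  proof (intro conjI allI)
    fix x y z
    show "f (- x + z) \<le> f (- x + y) + f (- y + z)"
      using f_sub[of "-x + y" "-y + z"] by (simp add: add.assoc)
  qed (auto simp: f_nonneg f0)
  show "left_invariant (\<lambda>x y. f (-x + y))"
    unfolding left_invariant_def by (simp only: minus_add add.assoc minus_add_cancel simp_thms)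
qed

lemma d_inv:
  assumes "\<And>c z. f (-c + z + c) = f z"
  shows "invariant (\<lambda>x y. f (-x + y))"
  unfolding invariant_def right_invariant_def using d_props(2)
proof (intro conjI allI)
  fix x y z :: 'a
  have "-(x + z) + (y + z) = -z + (-x + y) + z" by (simp only: add.assoc minus_add)
  then show "f (- (x + z) + (y + z)) = f (- x + y)" using assms[of z "-x + y"] by (simp only:)
qed simp

end



locale chain =
  fixes W :: "nat \<Rightarrow> 'a::{topological_space,group_add} set"
  assumes P: "paratopological_group TYPE('a)"
    and W_open: "open (W n)" and W_0: "0 \<in> W n"
    and W_trip: "a \<in> W (Suc n) \<Longrightarrow> b \<in> W (Suc n) \<Longrightarrow> c \<in> W (Suc n) \<Longrightarrow> a + b + c \<in> W n"
begin

definition wt :: "('a \<times> nat) list \<Rightarrow> real" where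
  "wt l = sum_list (map (\<lambda>p. (1/2::real) ^ snd p) l)"

definition val :: "('a \<times> nat) list \<Rightarrow> 'a" where
  "val l = sum_list (map fst l)"

definition valid :: "('a \<times> nat) list \<Rightarrow> bool" where
  "valid l \<longleftrightarrow> (\<forall>p\<in>set l. fst p \<in> W (snd p))"

lemma wt_nonneg: "0 \<le> wt l"
  by (induction l) (auto simp: wt_def)

lemma wt_Cons: "wt (p # l) = (1/2) ^ snd p + wt l" by (simp add: wt_def)
lemma wt_append: "wt (l1 @ l2) = wt l1 + wt l2" by (simp add: wt_def)
lemma val_Cons: "val (p # l) = fst p + val l" by (simp add: val_def)
lemma val_append: "val (l1 @ l2) = val l1 + val l2" by (simp add: val_def)

lemma wt_zero: "wt l \<le> 0 \<Longrightarrow> l = []"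
proof (cases l)
  case (Cons p l')
  assume "wt l \<le> 0"
  moreover have "0 < (1/2::real) ^ snd p" by simp
  ultimately show ?thesis using wt_nonneg[of l'] by (simp add: Cons wt_Cons)
qed simp

lemma W_Suc: "W (Suc n) \<subseteq> W n"
proof
  fix a assume "a \<in> W (Suc n)"
  from W_trip[OF this W_0 W_0] show "a \<in> W n" by simp
qed

lemma W_mono: "m \<le> n \<Longrightarrow> W n \<subseteq> W m"
  by (rule lift_Suc_antimono_le[of W]) (use W_Suc in auto)

lemma K: "valid l \<Longrightarrow> wt l \<le> (1/2) ^ m \<Longrightarrow> val l \<in> W m"
proof (induction "length l" arbitrary: l m rule: less_induct)
  case less
  show ?case
  proof (cases "l = []")
    case True
    then show ?thesis using W_0 by (simp add: val_def)
  next
    case False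
    define k where "k = length l"
    define h :: real where "h = (1/2) ^ Suc m"
    define J where "J = {j. j < k \<and> wt (take j l) \<le> h}"
    have J0: "0 \<in> J" using False by (simp add: J_def k_def h_def wt_def)
    have finJ: "finite J" by (simp add: J_def)
    define j where "j = Max J"
    have jJ: "j \<in> J" using Max_in[OF finJ] J0 by (auto simp: j_def)
    then have jk: "j < k" and pre: "wt (take j l) \<le> h" by (auto simp: J_def)
    have jmax: "i \<in> J \<Longrightarrow> i \<le> j" for i using Max_ge[OF finJ] by (simp add: j_def)
    define p where "p = l ! j"
    define suf where "suf = drop (Suc j) l"
    have spl: "l = take j l @ p # suf"
      using id_take_nth_drop[of j l] jk by (simp add: p_def suf_def k_def)
    have wsplit: "wt l = wt (take j l) + (1/2) ^ snd p + wt suf"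
    proof -
      have "wt l = wt (take j l @ p # suf)" by (rule arg_cong[OF spl])
      then show ?thesis by (simp add: wt_append wt_Cons)
    qed
    have vsplit: "val l = val (take j l) + fst p + val suf"
    proof -
      have "val l = val (take j l @ p # suf)" by (rule arg_cong[OF spl])
      then show ?thesis by (simp add: val_append val_Cons add.assoc)
    qed
    have tot: "wt l \<le> 2 * h" using less.prems(2) by (simp add: h_def)
    have sufb: "wt suf \<le> h"
    proof (cases "Suc j < k")
      case True
      then have "Suc j \<notin> J" using jmax by fastforce
      then have "\<not> wt (take (Suc j) l) \<le> h" using True by (simp add: J_def)
      moreover have "take (Suc j) l = take j l @ [p]"
        using take_Suc_conv_app_nth[of j l] jk by (simp add: p_def k_def)
      ultimately have "wt (take j l) + (1/2) ^ snd p > h" by (simp add: wt_append wt_Cons wt_def)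
      then show ?thesis using wsplit tot by linarith
    next
      case False
      then have "suf = []" using jk by (simp add: suf_def k_def)
      then show ?thesis by (simp add: wt_def h_def)
    qed
    have vpre: "valid (take j l)" using less.prems(1) set_take_subset[of j l]
      by (auto simp: valid_def)
    have vsuf: "valid suf" using less.prems(1) set_drop_subset[of "Suc j" l]
      by (auto simp: valid_def suf_def)
    have pin: "fst p \<in> W (snd p)" using less.prems(1) jk nth_mem[of j l]
      by (auto simp: valid_def p_def k_def)
    have lpre: "length (take j l) < length l" using jk by (simp add: k_def)
    have lsuf: "length suf < length l" using jk by (simp add: k_def suf_def)
    have IHpre: "val (take j l) \<in> W (Suc m)"
      using less.hyps[OF lpre vpre] pre by (simp add: h_def)
    have IHsuf: "val suf \<in> W (Suc m)"
      using less.hyps[OF lsuf vsuf] sufb by (simp add: h_def)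
    have tle: "(1/2::real) ^ snd p \<le> (1/2) ^ m"
      using wsplit less.prems(2) wt_nonneg[of "take j l"] wt_nonneg[of suf] by linarith
    then have msp: "m \<le> snd p" using power_decreasing_iff[of "1/2::real" m "snd p"] by simp
    show ?thesis
    proof (cases "snd p = m")
      case True
      then have "wt (take j l) + wt suf \<le> 0" using wsplit less.prems(2) by simp
      then have w1: "wt (take j l) \<le> 0" and w2: "wt suf \<le> 0"
        using wt_nonneg[of "take j l"] wt_nonneg[of suf] by linarith+
      have "val (take j l) = 0" using wt_zero[OF w1] by (simp only: val_def list.map sum_list.Nil)
      moreover have "val suf = 0" using wt_zero[OF w2] by (simp add: val_def)
      ultimately have "val l = fst p" using vsplit by simp
      then show ?thesis using pin True by simp
    next
      case False
      then have "Suc m \<le> snd p" using msp by simp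
      then have "fst p \<in> W (Suc m)" using W_mono pin by blast
      then show ?thesis using W_trip[OF IHpre _ IHsuf] vsplit by simp
    qed
  qed
qed

definition S :: "'a \<Rightarrow> real set" where
  "S z = {1} \<union> {wt l |l. valid l \<and> val l = z}"

definition F :: "'a \<Rightarrow> real" where "F z = Inf (S z)"

lemma S_bdd: "bdd_below (S z)"
  by (rule bdd_belowI[of _ 0]) (auto simp: S_def wt_nonneg)

lemma S_ne: "S z \<noteq> {}" by (simp add: S_def)

lemma F_le: "s \<in> S z \<Longrightarrow> F z \<le> s"
  unfolding F_def by (rule cInf_lower[OF _ S_bdd])

lemma F_le_chain: "valid l \<Longrightarrow> F (val l) \<le> wt l"
  by (rule F_le) (auto simp: S_def)

lemma F_nonneg: "0 \<le> F z"
  unfolding F_def by (rule cInf_greatest[OF S_ne]) (auto simp: S_def wt_nonneg)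

lemma F_le1: "F z \<le> 1" by (rule F_le) (simp add: S_def)

lemma F0: "F 0 = 0"
proof -
  have "F (val []) \<le> wt []" by (rule F_le_chain) (simp add: valid_def)
  then show ?thesis using F_nonneg[of 0] by (simp add: val_def wt_def)
qed

lemma F_less: "F z < e \<Longrightarrow> \<exists>s\<in>S z. s < e"
  unfolding F_def by (rule cInf_lessD[OF S_ne])

lemma F_sub: "F (a + b) \<le> F a + F b"
proof -
  have key: "F (a + b) \<le> s + t" if s: "s \<in> S a" and t: "t \<in> S b" for s t
  proof -
    have s0: "0 \<le> s" using s by (auto simp: S_def wt_nonneg)
    have t0: "0 \<le> t" using t by (auto simp: S_def wt_nonneg)
    show ?thesis
    proof (cases "s = 1 \<or> t = 1")
      case True
      then show ?thesis using F_le1[of "a + b"] s0 t0 by auto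
    next
      case False
      then obtain la lb where "valid la" "val la = a" "wt la = s" "valid lb" "val lb = b" "wt lb = t"
        using s t by (auto simp: S_def)
      then have "valid (la @ lb)" "val (la @ lb) = a + b" "wt (la @ lb) = s + t"
        by (auto simp: valid_def val_append wt_append)
      then show ?thesis using F_le_chain[of "la @ lb"] by simp
    qed
  qed
  have "F (a + b) - F b \<le> F a" unfolding F_def[of a]
  proof (rule cInf_greatest[OF S_ne])
    fix s assume s: "s \<in> S a"
    have "F (a + b) - s \<le> F b" unfolding F_def[of b]
    proof (rule cInf_greatest[OF S_ne])
      fix t assume "t \<in> S b"
      from key[OF s this] show "F (a + b) - s \<le> t" by simp
    qed
    then show "F (a + b) - F b \<le> s" by simp
  qed
  then show ?thesis by simp
qed

lemma F_open: "open {z. F z < e}"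
proof (subst open_subopen, intro ballI)
  fix z assume "z \<in> {z. F z < e}"
  then obtain s where s: "s \<in> S z" "s < e" using F_less by auto
  show "\<exists>T. open T \<and> z \<in> T \<and> T \<subseteq> {z. F z < e}"
  proof (cases "s = 1")
    case True
    then have "{z. F z < e} = UNIV" using s F_le1 by (auto intro: le_less_trans)
    then show ?thesis by auto
  next
    case False
    then obtain l where l: "valid l" "val l = z" "wt l = s" using s by (auto simp: S_def)
    obtain n where n: "(1/2::real) ^ n < e - s" using real_arch_pow_inv[of "e - s" "1/2"] s by auto
    let ?T = "{y. -z + y \<in> W n}"
    have "open ?T" by (rule open_left_vimage[OF P W_open])
    moreover have "z \<in> ?T" using W_0 by simp
    moreover have "?T \<subseteq> {z. F z < e}"
    proof
      fix y assume y: "y \<in> ?T"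
      let ?l = "l @ [(-z + y, n)]"
      have "valid ?l" using l y by (auto simp: valid_def)
      moreover have "val ?l = y" using l by (simp add: val_append val_def)
      moreover have "wt ?l = s + (1/2) ^ n" using l by (simp add: wt_append wt_def)
      ultimately have "F y \<le> s + (1/2) ^ n" using F_le_chain[of ?l] by simp
      then show "y \<in> {z. F z < e}" using n by simp
    qed
    ultimately show ?thesis by blast
  qed
qed

lemma F_good: "good F"
  unfolding good_def using F_nonneg F_le1 F0 F_sub F_open by blast

lemma F_lt1: "F z < 1 \<Longrightarrow> z \<in> W 0"
proof -
  assume "F z < 1"
  then obtain s where s: "s \<in> S z" "s < 1" using F_less by auto
  then obtain l where "valid l" "val l = z" "wt l = s" by (auto simp: S_def)
  then show ?thesis using K[of l 0] s by simp
qed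

lemma val_conj: "val (map (\<lambda>p. (-c + fst p + c, snd p)) l) = -c + val l + c"
  by (induction l) (simp_all add: val_def add.assoc)

lemma wt_conj: "wt (map (\<lambda>p. (-c + fst p + c, snd p)) l) = wt l"
  by (induction l) (simp_all add: wt_def)

lemma F_conj_le:
  assumes cj: "\<And>n c w. w \<in> W n \<Longrightarrow> -c + w + c \<in> W n"
  shows "F (-c + z + c) \<le> F z"
  unfolding F_def[of z]
proof (rule cInf_greatest[OF S_ne])
  fix s assume "s \<in> S z"
  then consider "s = 1" | l where "valid l" "val l = z" "wt l = s" by (auto simp: S_def)
  then show "F (-c + z + c) \<le> s"
  proof cases
    case 1 then show ?thesis using F_le1 by simp
  next
    case 2
    let ?m = "map (\<lambda>p. (-c + fst p + c, snd p)) l"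
    have "valid ?m" using 2 cj by (auto simp: valid_def)
    then have "F (val ?m) \<le> wt ?m" by (rule F_le_chain)
    then show ?thesis using 2 by (simp only: val_conj wt_conj)
  qed
qed

lemma F_conj:
  assumes cj: "\<And>n c w. w \<in> W n \<Longrightarrow> -c + w + c \<in> W n"
  shows "F (-c + z + c) = F z"
proof -
  have "F (- (-c) + (-c + z + c) + (-c)) \<le> F (-c + z + c)" by (rule F_conj_le[OF cj])
  moreover have "- (-c) + (-c + z + c) + (-c) = z"
    by (simp only: minus_minus add.assoc add_minus_cancel right_minus add_0_right)
  ultimately have "F z \<le> F (-c + z + c)" by simp
  then show ?thesis using F_conj_le[OF cj, of c z] by simp
qed

end



lemma nbhd2:
  assumes P: "paratopological_group TYPE('a::{topological_space,group_add})"
    and Ob: "open (Ob::'a set)" "0 \<in> Ob"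
  shows "\<exists>V. open V \<and> 0 \<in> V \<and> (\<forall>a b. a \<in> V \<longrightarrow> b \<in> V \<longrightarrow> a + b \<in> Ob)"
proof -
  have "open ((\<lambda>p::'a\<times>'a. fst p + snd p) -` Ob)" by (rule open_vimage[OF Ob(1) pg_cont[OF P]])
  moreover have "((0::'a), (0::'a)) \<in> (\<lambda>p::'a\<times>'a. fst p + snd p) -` Ob" using Ob by simp
  ultimately obtain A B where AB: "open A" "open B" "((0::'a), (0::'a)) \<in> A \<times> B"
      "A \<times> B \<subseteq> (\<lambda>p::'a\<times>'a. fst p + snd p) -` Ob"
    by (rule open_prod_elim)
  have "a + b \<in> Ob" if "a \<in> A \<inter> B" "b \<in> A \<inter> B" for a b
  proof -
    have "(a, b) \<in> A \<times> B" using that by blast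
    then have "(a, b) \<in> (\<lambda>p::'a\<times>'a. fst p + snd p) -` Ob" using AB(4) by (rule subsetD[rotated])
    then show ?thesis by simp
  qed
  moreover have "open (A \<inter> B)" using AB(1,2) by (rule open_Int)
  moreover have "0 \<in> A \<inter> B" using AB(3) by simp
  ultimately show ?thesis by blast
qed

definition Pr :: "'a::{topological_space,group_add} set \<Rightarrow> 'a set \<Rightarrow> bool" where
  "Pr Ob V \<longleftrightarrow> open V \<and> 0 \<in> V \<and> (\<forall>a b c. a \<in> V \<longrightarrow> b \<in> V \<longrightarrow> c \<in> V \<longrightarrow> a + b + c \<in> Ob) \<and>
     (balanced_group TYPE('a) \<longrightarrow> (\<forall>c w. w \<in> V \<longrightarrow> -c + w + c \<in> V))"

lemma nbhd3:
  assumes P: "paratopological_group TYPE('a::{topological_space,group_add})"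
    and Ob: "open (Ob::'a set)" "0 \<in> Ob"
  shows "\<exists>V. Pr Ob V"
proof -
  obtain V1 where V1: "open V1" "0 \<in> V1" "\<And>a b. a \<in> V1 \<Longrightarrow> b \<in> V1 \<Longrightarrow> a + b \<in> Ob"
    using nbhd2[OF P Ob] by blast
  obtain V2 where V2: "open V2" "0 \<in> V2" "\<And>a b. a \<in> V2 \<Longrightarrow> b \<in> V2 \<Longrightarrow> a + b \<in> V1"
    using nbhd2[OF P V1(1,2)] by blast
  have sub: "V2 \<subseteq> V1"
  proof
    fix a assume "a \<in> V2"
    from V2(3)[OF this V2(2)] show "a \<in> V1" by simp
  qed
  have trip: "a + b + c \<in> Ob" if "a \<in> V2" "b \<in> V2" "c \<in> V2" for a b c
  proof -
    have "a + (b + c) \<in> Ob" using V1(3)[OF subsetD[OF sub that(1)] V2(3)[OF that(2,3)]] .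
    then show ?thesis by (simp add: add.assoc)
  qed
  show ?thesis
  proof (cases "balanced_group TYPE('a)")
    case False
    have "Pr Ob V2" unfolding Pr_def using V2(1,2) trip False by simp
    then show ?thesis by blast
  next
    case True
    then have "open V2 \<and> 0 \<in> V2 \<longrightarrow>
        (\<exists>V. open V \<and> 0 \<in> V \<and> V \<subseteq> V2 \<and> (\<forall>x. (\<lambda>v. x + v) ` V = (\<lambda>v. v + x) ` V))"
      unfolding balanced_group_def by (rule spec)
    then have "\<exists>V. open V \<and> 0 \<in> V \<and> V \<subseteq> V2 \<and> (\<forall>x. (\<lambda>v. x + v) ` V = (\<lambda>v. v + x) ` V)"
      using V2(1,2) by (rule mp[OF _ conjI])
    then obtain V3 where V3: "open V3" "0 \<in> V3" "V3 \<subseteq> V2"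
        "\<And>x. (\<lambda>v. x + v) ` V3 = (\<lambda>v. v + x) ` V3"
      by (elim exE conjE) (rule that, assumption+, erule spec)
    have cj: "-c + w + c \<in> V3" if "w \<in> V3" for c w
    proof -
      have "w + c \<in> (\<lambda>v. v + c) ` V3" using that by (rule imageI)
      then have "w + c \<in> (\<lambda>v. c + v) ` V3" using V3(4)[of c] by (simp only:)
      then obtain v where v: "v \<in> V3" "w + c = c + v" by (rule imageE) (rule that, assumption+)
      have "-c + w + c = -c + (w + c)" by (simp only: add.assoc)
      also have "\<dots> = v" using v(2) by (simp only: minus_add_cancel)
      finally show ?thesis using v(1) by simp
    qed
    have "Pr Ob V3" unfolding Pr_def
    proof (intro conjI allI impI)
      fix a b c assume "a \<in> V3" "b \<in> V3" "c \<in> V3"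
      then show "a + b + c \<in> Ob" using trip V3(3) by blast
    next
      fix c w assume "w \<in> V3"
      then show "-c + w + c \<in> V3" by (rule cj)
    qed (use V3 in auto)
    then show ?thesis by blast
  qed
qed

lemma Pr_open: "Pr Ob V \<Longrightarrow> open V" by (simp add: Pr_def)
lemma Pr_0: "Pr Ob V \<Longrightarrow> 0 \<in> V" by (simp add: Pr_def)
lemma Pr_trip: "Pr Ob V \<Longrightarrow> a \<in> V \<Longrightarrow> b \<in> V \<Longrightarrow> c \<in> V \<Longrightarrow> a + b + c \<in> Ob"
  unfolding Pr_def by (elim conjE) (drule spec, drule spec, drule spec, drule mp, assumption, drule mp, assumption, drule mp)
lemma Pr_conj: "Pr Ob (V::'a::{topological_space,group_add} set) \<Longrightarrow> balanced_group TYPE('a) \<Longrightarrow> w \<in> V \<Longrightarrow> -c + w + c \<in> V"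
  unfolding Pr_def by (elim conjE) (drule mp, assumption, drule spec, drule spec, drule mp)

theorem theorem7p4:
  fixes U :: "'a::{topological_space,group_add} set"
  assumes "paratopological_group TYPE('a)"
    and "0 \<in> interior U"
  shows "\<exists>d::'a \<Rightarrow> 'a \<Rightarrow> real.
           quasi_pseudometric d \<and> (\<forall>x y. d x y \<le> 1) \<and>
           left_invariant d \<and> dist_continuous d \<and>
           dbar d = dbar_circ d \<and>
           quasi_pseudometric (dbar d) \<and> left_invariant (dbar d) \<and>
           right_continuous (dbar d) \<and> dist_continuous (dbar d) \<and>
           (\<forall>x. qball d x 1 \<subseteq> (\<lambda>u. x + u) ` U) \<and>
           (\<forall>x. qball (dbar d) x 1 \<subseteq> (\<lambda>u. x + u) ` interior (closure U)) \<and>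
           (balanced_group TYPE('a) \<longrightarrow> invariant d \<and> invariant (dbar d))"
proof -
  note P = assms(1)
  define W where "W = rec_nat (SOME V. Pr (interior U) V) (\<lambda>n X. SOME V. Pr X V)"
  have W0: "W 0 = (SOME V. Pr (interior U) V)" by (simp add: W_def)
  have WS: "W (Suc n) = (SOME V. Pr (W n) V)" for n by (simp add: W_def)
  have PrW0: "Pr (interior U) (W 0)"
    unfolding W0 by (rule someI_ex[OF nbhd3[OF P open_interior assms(2)]])
  have on: "open (W n) \<and> 0 \<in> W n" for n
  proof (induction n)
    case 0 then show ?case using Pr_open[OF PrW0] Pr_0[OF PrW0] by simp
  next
    case (Suc n)
    have "Pr (W n) (W (Suc n))" unfolding WS by (rule someI_ex[OF nbhd3[OF P]]) (use Suc in auto)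
    then show ?case using Pr_open Pr_0 by blast
  qed
  have PrWS: "Pr (W n) (W (Suc n))" for n
    unfolding WS by (rule someI_ex[OF nbhd3[OF P]]) (use on in auto)
  interpret C: chain W
  proof
    show "paratopological_group TYPE('a)" by (rule P)
    show "open (W n)" "0 \<in> W n" for n using on by auto
    show "a + b + c \<in> W n" if "a \<in> W (Suc n)" "b \<in> W (Suc n)" "c \<in> W (Suc n)" for a b c n
      using Pr_trip[OF PrWS[of n] that] .
  qed
  have cjW: "\<And>n c w. w \<in> W n \<Longrightarrow> -c + w + c \<in> W n" if bal: "balanced_group TYPE('a)"
  proof -
    fix n c w assume w: "w \<in> W n"
    show "-c + w + c \<in> W n"
    proof (cases n)
      case 0 then show ?thesis using Pr_conj[OF PrW0 bal] w by simp
    next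
      case (Suc m) then show ?thesis using Pr_conj[OF PrWS[of m] bal] w by simp
    qed
  qed
  have W0U: "W 0 \<subseteq> U"
  proof
    fix a assume "a \<in> W 0"
    then have "a + 0 + 0 \<in> interior U" using Pr_trip[OF PrW0 _ Pr_0[OF PrW0] Pr_0[OF PrW0]] by blast
    then show "a \<in> U" using interior_subset by auto
  qed
  define F where "F = C.F"
  interpret G1: gf F using P C.F_good unfolding F_def by unfold_locales auto
  interpret G2: gf G1.g using P G1.g_good by unfold_locales auto
  define d where "d = (\<lambda>x y. F (-x + y))"
  have dbar_d: "dbar d = (\<lambda>x y. G1.g (-x + y))" unfolding d_def by (rule G1.dbar_eq)
  have F1: "F z < 1 \<Longrightarrow> z \<in> U" for z using C.F_lt1 W0U unfolding F_def by auto
  have FU: "{w. F w < 1} \<subseteq> U" using F1 by auto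
  show ?thesis
  proof (intro exI[of _ d] conjI allI impI)
    show "quasi_pseudometric d" "left_invariant d" unfolding d_def using G1.d_props by auto
    show "d x y \<le> 1" for x y unfolding d_def by (rule G1.f_le1)
    show "dist_continuous d" unfolding d_def by (rule G1.dist_cont)
    show "dbar d = dbar_circ d" unfolding d_def by (rule G1.dbar_circ_eq[symmetric])
    show "quasi_pseudometric (dbar d)" "left_invariant (dbar d)" unfolding dbar_d using G2.d_props by auto
    show "dist_continuous (dbar d)" unfolding dbar_d by (rule G2.dist_cont)
    show "right_continuous (dbar d)"
    proof -
      have "dist_continuous d" unfolding d_def by (rule G1.dist_cont)
      then show ?thesis unfolding right_continuous_def dist_continuous_def dbar_def by auto
    qed
    show "qball d x 1 \<subseteq> (\<lambda>u. x + u) ` U" for x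
    proof
      fix y assume "y \<in> qball d x 1"
      then have "-x + y \<in> U" using F1 by (simp add: qball_def d_def)
      then show "y \<in> (\<lambda>u. x + u) ` U" by (rule rev_image_eqI) simp
    qed
    show "qball (dbar d) x 1 \<subseteq> (\<lambda>u. x + u) ` interior (closure U)" for x
    proof
      fix y assume "y \<in> qball (dbar d) x 1"
      then have "G1.g (-x + y) < 1" by (simp add: qball_def dbar_d)
      then have "-x + y \<in> interior (closure {w. F w < 1})" by (rule G1.g_lt1)
      then have "-x + y \<in> interior (closure U)" using interior_mono[OF closure_mono[OF FU]] by blast
      then show "y \<in> (\<lambda>u. x + u) ` interior (closure U)" by (rule rev_image_eqI) simp
    qed
  next
    assume bal: "balanced_group TYPE('a)"
    have Fc: "F (-c + z + c) = F z" for c z unfolding F_def by (rule C.F_conj[OF cjW[OF bal]])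
    have gc: "G1.g (-c + z + c) = G1.g z" for c z by (rule G1.g_conj[OF Fc])
    show "invariant d" unfolding d_def by (rule G1.d_inv[OF Fc])
    show "invariant (dbar d)" unfolding dbar_d by (rule G2.d_inv[OF gc])
  qed
qed


end
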